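(* Consider the directed Poisson process stochastic block model with $n$ individuals, $Q$ groups, parameter $\theta=(\pi,\alpha)$, and observations $\mathcal O=\{(t_m,i_m,j_m): m=1,\dots,M\}$ on $[0,T]$. Let $$\mathcal T=\Big\{\tau=(\tau^{i,q})_{i\le n,q\le Q}:\ \tau^{i,q}\ge0,\ \textstyle\sum_{q=1}^Q\tau^{i,q}=1\ \text{for all } i\Big\},$$ and for $\tau\in\mathcal T$ let $\mathrm{pr}_\tau(\cdot\mid\mathcal O)$ be the factorized distribution on $\mathcal Z=(Z_1,\dots,Z_n)$ given by $\mathrm{pr}_\tau\{\mathcal Z=(q_1,\dots,q_n)\mid\mathcal O\}=\prod_{i=1}^n\tau^{i,q_i}$. Then the solution $\hat\tau$ of $$\hat\tau=\operatorname{Argmin}_{\tau\in\mathcal T}\mathrm{KL}\big(\mathrm{pr}_\tau(\cdot\mid\mathcal O)\,\big\|\,\mathrm{pr}_\theta(\cdot\mid\mathcal O)\big)$$ satisfies the fixed point equation $$\hat\tau^{i,q}=\frac{\pi_q\exp\{D_{iq}(\hat\tau,\alpha)\}}{\sum_{q'=1}^Q\pi_{q'}\exp\{D_{iq'}(\hat\tau,\alpha)\}},\qquad (i=1,\dots,n;\ q=1,\dots,Q),$$ where $$D_{iq}(\tau,\alpha)=-\sum_{l=1}^Q\sum_{j\ne i}\tau^{j,l}\{A^{(q,l)}(T)+A^{(l,q)}(T)\}+\sum_{l=1}^Q\sum_{m=1}^M\Big[\mathbf 1_{\{i_m=i\}}\tau^{j_m,l}\log\{\alpha^{(q,l)}(t_m)\}+\mathbf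 1_{\{j_m=i\}}\tau^{i_m,l}\log\{\alpha^{(l,q)}(t_m)\}\Big].$$
   Context: Directed Poisson process stochastic block model: $n$ individuals, dyads $\mathcal R=\{(i,j): i\ne j\}$. Latent $Z_1,\dots,Z_n$ i.i.d. in $\{1,\dots,Q\}$ with $\mathrm{pr}(Z_1=q)=\pi_q>0$. Conditionally on the $Z_i$'s, the counting processes $N_{i,j}$, $(i,j)\in\mathcal R$, on $[0,T]$ are independent inhomogeneous Poisson processes with intensity $\alpha^{(Z_i,Z_j)}$, where the $\alpha^{(q,l)}$ are nonnegative functions with cumulative intensities $A^{(q,l)}(t)=\int_0^t\alpha^{(q,l)}(u)\,du$. The observations are the events $\mathcal O=\{(t_m,i_m,j_m)\}_{m=1}^M$, meaning an interaction from $i_m$ to $j_m$ at time $t_m$, with $0<t_1<\dots<t_M<T$. $\mathrm{pr}_\theta(\cdot\mid\mathcal O)$ is the true conditional distribution of $\mathcal Z$ given $\mathcal O$, derived from the complete-data likelihood $\mathcal L(\mathcal O,\mathcal Z\mid\theta)=\exp\{-\sum_{(i,j)\in\mathcal R}A^{(Z_i,Z_j)}(T)\}\prod_{m=1}^M\alpha^{(Z_{i_m},Z_{j_m})}(t_m)\prod_{i=1}^n\pi_{Z_i}$. $\mathrm{KL}$ denotes Kullback–Leibler divergence and $\mathbf 1_A$ the indicator of $A$. *)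

theory Defs
  imports "HOL-Analysis.Analysis"
begin

text \<open>Conventions: individuals are 0,...,n-1, groups are 0,...,Q-1, events are
indexed by m = 0,...,M-1.  The event m is (t m, ii m, jj m).\<close>

definition cumint :: "(nat \<Rightarrow> nat \<Rightarrow> real \<Rightarrow> real) \<Rightarrow> nat \<Rightarrow> nat \<Rightarrow> real \<Rightarrow> real" where
  "cumint alpha q l t = integral {0..t} (alpha q l)"

definition dyads :: "nat \<Rightarrow> (nat \<times> nat) set" where
  "dyads n = {(i,j). i < n \<and> j < n \<and> i \<noteq> j}"

definition configs :: "nat \<Rightarrow> nat \<Rightarrow> (nat \<Rightarrow> nat) set" where
  "configs n Q = PiE {..<n} (\<lambda>_. {..<Q})"

definition complete_lik ::
  "nat \<Rightarrow> (nat \<Rightarrow> real) \<Rightarrow> (nat \<Rightarrow> nat \<Rightarrow> real \<Rightarrow> real) \<Rightarrow> real \<Rightarrow> nat \<Rightarrow>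
   (nat \<Rightarrow> real) \<Rightarrow> (nat \<Rightarrow> nat) \<Rightarrow> (nat \<Rightarrow> nat) \<Rightarrow> (nat \<Rightarrow> nat) \<Rightarrow> real" where
  "complete_lik n piv alpha T M t ii jj z =
     exp (- (\<Sum>(i,j)\<in>dyads n. cumint alpha (z i) (z j) T))
     * (\<Prod>m<M. alpha (z (ii m)) (z (jj m)) (t m))
     * (\<Prod>i<n. piv (z i))"

definition posterior ::
  "nat \<Rightarrow> nat \<Rightarrow> (nat \<Rightarrow> real) \<Rightarrow> (nat \<Rightarrow> nat \<Rightarrow> real \<Rightarrow> real) \<Rightarrow> real \<Rightarrow> nat \<Rightarrow>
   (nat \<Rightarrow> real) \<Rightarrow> (nat \<Rightarrow> nat) \<Rightarrow> (nat \<Rightarrow> nat) \<Rightarrow> (nat \<Rightarrow> nat) \<Rightarrow> real" where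
  "posterior n Q piv alpha T M t ii jj z =
     complete_lik n piv alpha T M t ii jj z /
     (\<Sum>z'\<in>configs n Q. complete_lik n piv alpha T M t ii jj z')"

definition var_params :: "nat \<Rightarrow> nat \<Rightarrow> (nat \<Rightarrow> nat \<Rightarrow> real) set" where
  "var_params n Q = {tau. \<forall>i<n. (\<forall>q<Q. 0 \<le> tau i q) \<and> (\<Sum>q<Q. tau i q) = 1}"

definition factorized :: "nat \<Rightarrow> (nat \<Rightarrow> nat \<Rightarrow> real) \<Rightarrow> (nat \<Rightarrow> nat) \<Rightarrow> real" where
  "factorized n tau z = (\<Prod>i<n. tau i (z i))"

definition KL :: "'a set \<Rightarrow> ('a \<Rightarrow> real) \<Rightarrow> ('a \<Rightarrow> real) \<Rightarrow> ereal" where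
  "KL S p q =
     (if \<exists>z\<in>S. p z \<noteq> 0 \<and> q z = 0 then \<infinity>
      else ereal (\<Sum>z\<in>S. if p z = 0 then 0 else p z * ln (p z / q z)))"

definition Dfun ::
  "nat \<Rightarrow> nat \<Rightarrow> (nat \<Rightarrow> nat \<Rightarrow> real \<Rightarrow> real) \<Rightarrow> real \<Rightarrow> nat \<Rightarrow>
   (nat \<Rightarrow> real) \<Rightarrow> (nat \<Rightarrow> nat) \<Rightarrow> (nat \<Rightarrow> nat) \<Rightarrow> (nat \<Rightarrow> nat \<Rightarrow> real) \<Rightarrow> nat \<Rightarrow> nat \<Rightarrow> real" where
  "Dfun n Q alpha T M t ii jj tau i q =
     - (\<Sum>l<Q. \<Sum>j\<in>{..<n} - {i}. tau j l * (cumint alpha q l T + cumint alpha l q T))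
     + (\<Sum>l<Q. \<Sum>m<M.
          (if ii m = i then tau (jj m) l * ln (alpha q l (t m)) else 0)
        + (if jj m = i then tau (ii m) l * ln (alpha l q (t m)) else 0))"

end

theory Submission imports Defs begin

lemma psum:
  "(\<Sum>z\<in>configs n Q. \<Prod>k<n. w k (z k)) = (\<Prod>k<n. \<Sum>l<Q. (w k l :: real))"
  unfolding configs_def by (rule prod_sum_PiE[symmetric]) auto

lemma prod_delta2:
  fixes n a b :: nat
  assumes "a < n" "b < n" "a \<noteq> b"
  shows "(\<Prod>k<n. if k = a then x else if k = b then y else 1) = (x * y :: real)"
proof -
  have h1: "(\<Prod>k<n. if k = a then x else if k = b then y else 1)
      = (if a = a then x else if a = b then y else 1) * (\<Prod>k\<in>{..<n}-{a}. if k = a then x else if k = b then y else 1)"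
    proof (rule prod.remove)
    show "a \<in> {..<n}" using assms by simp
  qed simp
  have h2: "(\<Prod>k\<in>{..<n}-{a}. if k = a then x else if k = b then y else 1) = (\<Prod>k\<in>{..<n}-{a}. if k = b then y else 1)"
    by (intro prod.cong) auto
  have "(\<Prod>k\<in>{..<n}-{a}. if k = b then y else 1) = y"
    using assms by (subst prod.delta) auto
  thus ?thesis using h1 h2 by simp
qed

lemma sdelta: "(y::nat) < Q \<Longrightarrow> (\<Sum>l<Q. f l * (if y = l then c else 0)) = f y * (c::real)"
proof -
  assume y: "y < Q"
  have "(\<Sum>l<Q. f l * (if y = l then c else 0)) = (\<Sum>l<Q. if y = l then f l * c else 0)"
    by (rule sum.cong) auto
  also have "\<dots> = f y * c" using y by (subst sum.delta') auto
  finally show ?thesis .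
qed

lemma E2:
  assumes tau: "tau \<in> var_params n Q" and a: "a < n"
  shows "(\<Sum>z\<in>configs n Q. factorized n tau z * \<phi> (z a)) = (\<Sum>l<Q. tau a l * (\<phi> l :: real))"
proof -
  have eq1: "factorized n tau z * \<phi> (z a) = (\<Sum>l<Q. \<phi> l * (\<Prod>k<n. if k = a then (if z k = l then tau k (z k) else 0) else tau k (z k)))"
    if z: "z \<in> configs n Q" for z
  proof -
    have za: "z a < Q" using z a by (auto simp: configs_def PiE_def Pi_def)
    have "(\<Prod>k<n. if k = a then (if z k = l then tau k (z k) else 0) else tau k (z k))
        = (if z a = l then factorized n tau z else 0)" (is "?P l = _") for l
    proof (cases "z a = l")
      case True thus ?thesis unfolding factorized_def by simp (intro prod.cong, auto)
    next
      case False
      have "\<exists>k\<in>{..<n}. (if k = a then (if z k = l then tau k (z k) else 0) else tau k (z k)) = 0"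
        using a False by (intro bexI[of _ a]) auto
      thus ?thesis using False by (simp only: prod_zero_iff finite_lessThan) simp
    qed
    hence "(\<Sum>l<Q. \<phi> l * ?P l) = (\<Sum>l<Q. \<phi> l * (if z a = l then factorized n tau z else 0))"
      by simp
    also have "\<dots> = (\<Sum>l<Q. if z a = l then \<phi> l * factorized n tau z else 0)"
      by (intro sum.cong) auto
    also have "\<dots> = \<phi> (z a) * factorized n tau z" using za by (subst sum.delta') auto
    finally show ?thesis by simp
  qed
  have "(\<Sum>z\<in>configs n Q. factorized n tau z * \<phi> (z a))
      = (\<Sum>l<Q. \<phi> l * (\<Sum>z\<in>configs n Q. (\<Prod>k<n. if k = a then (if z k = l then tau k (z k) else 0) else tau k (z k))))"
    by (simp add: eq1 sum_distrib_left sum.swap[of _ "configs n Q"] cong: sum.cong)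
  also have "\<dots> = (\<Sum>l<Q. \<phi> l * (\<Prod>k<n. \<Sum>l'<Q. if k = a then (if l' = l then tau k l' else 0) else tau k l'))"
    by (subst psum[symmetric]) (simp add: if_distrib)
  also have "\<dots> = (\<Sum>l<Q. \<phi> l * (\<Prod>k<n. if k = a then tau a l else 1))"
  proof (intro sum.cong refl arg_cong2[where f="(*)"] prod.cong)
    fix l k assume "l \<in> {..<Q}" "k \<in> {..<n}"
    thus "(\<Sum>l'<Q. if k = a then (if l' = l then tau k l' else 0) else tau k l') = (if k = a then tau a l else 1)"
      using tau by (auto simp: var_params_def)
  qed
  also have "\<dots> = (\<Sum>l<Q. tau a l * \<phi> l)" using a by (simp add: prod.delta mult.commute)
  finally show ?thesis .
qed

lemma E3:
  assumes tau: "tau \<in> var_params n Q" and a: "a < n" and b: "b < n" and ab: "a \<noteq> b"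
  shows "(\<Sum>z\<in>configs n Q. factorized n tau z * \<phi> (z a) (z b))
       = (\<Sum>l1<Q. \<Sum>l2<Q. tau a l1 * tau b l2 * (\<phi> l1 l2 :: real))"
proof -
  define w where "w l1 l2 k l' = (if k = a then (if l' = l1 then tau k l' else 0)
      else if k = b then (if l' = l2 then tau k l' else 0) else tau k l')" for l1 l2 k l'
  have eq1: "factorized n tau z * \<phi> (z a) (z b) = (\<Sum>l1<Q. \<Sum>l2<Q. \<phi> l1 l2 * (\<Prod>k<n. w l1 l2 k (z k)))"
    if z: "z \<in> configs n Q" for z
  proof -
    have za: "z a < Q" "z b < Q" using z a b by (auto simp: configs_def PiE_def Pi_def)
    have P: "(\<Prod>k<n. w l1 l2 k (z k)) = (if z a = l1 then if z b = l2 then factorized n tau z else 0 else 0)" for l1 l2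
    proof (cases "z a = l1 \<and> z b = l2")
      case True thus ?thesis unfolding factorized_def w_def by simp (intro prod.cong, auto)
    next
      case False
      have "\<exists>k\<in>{..<n}. w l1 l2 k (z k) = 0"
      proof (cases "z a = l1")
        case True thus ?thesis using a b ab False unfolding w_def by (intro bexI[of _ b]) auto
      next
        case False thus ?thesis using a b ab unfolding w_def by (intro bexI[of _ a]) auto
      qed
      hence "(\<Prod>k<n. w l1 l2 k (z k)) = 0" by (simp only: prod_zero_iff finite_lessThan)
      thus ?thesis using False by auto
    qed
    have "(\<Sum>l1<Q. \<Sum>l2<Q. \<phi> l1 l2 * (\<Prod>k<n. w l1 l2 k (z k)))
       = (\<Sum>l1<Q. (\<Sum>l2<Q. \<phi> l1 l2 * (if z b = l2 then factorized n tau z else 0)) * (if z a = l1 then 1 else 0))"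
      unfolding P sum_distrib_right by (intro sum.cong refl) auto
    also have "\<dots> = (\<Sum>l1<Q. (\<phi> l1 (z b) * factorized n tau z) * (if z a = l1 then 1 else 0))"
      using za by (simp add: sdelta)
    also have "\<dots> = \<phi> (z a) (z b) * factorized n tau z" using za by (simp add: sdelta[where c=1, simplified])
    finally show ?thesis by simp
  qed
  have "(\<Sum>z\<in>configs n Q. factorized n tau z * \<phi> (z a) (z b))
      = (\<Sum>l1<Q. \<Sum>l2<Q. \<phi> l1 l2 * (\<Sum>z\<in>configs n Q. (\<Prod>k<n. w l1 l2 k (z k))))"
    by (simp add: eq1 sum_distrib_left sum.swap[of _ "configs n Q"] cong: sum.cong)
  also have "\<dots> = (\<Sum>l1<Q. \<Sum>l2<Q. \<phi> l1 l2 * (\<Prod>k<n. \<Sum>l'<Q. w l1 l2 k l'))"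
    by (subst psum) simp
  also have "\<dots> = (\<Sum>l1<Q. \<Sum>l2<Q. \<phi> l1 l2 * (\<Prod>k<n. if k = a then tau a l1 else if k = b then tau b l2 else 1))"
  proof (intro sum.cong refl arg_cong2[where f="(*)"] prod.cong)
    fix l1 l2 k assume "l1 \<in> {..<Q}" "l2 \<in> {..<Q}" "k \<in> {..<n}"
    thus "(\<Sum>l'<Q. w l1 l2 k l') = (if k = a then tau a l1 else if k = b then tau b l2 else 1)"
      using tau unfolding w_def by (auto simp: var_params_def)
  qed
  also have "\<dots> = (\<Sum>l1<Q. \<Sum>l2<Q. tau a l1 * tau b l2 * \<phi> l1 l2)"
    using a b ab by (simp add: prod_delta2 mult.commute)
  finally show ?thesis .
qed

lemma fac_sum1:
  assumes tau: "tau \<in> var_params n Q"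
  shows "(\<Sum>z\<in>configs n Q. factorized n tau z) = 1"
  using tau unfolding factorized_def by (subst psum) (auto simp: var_params_def)

lemma configs_in: "z \<in> configs n Q \<Longrightarrow> k < n \<Longrightarrow> z k < Q"
  by (auto simp: configs_def PiE_def Pi_def)

lemma configs_finite: "finite (configs n Q)"
  unfolding configs_def by (rule finite_PiE) auto

lemma dyads_finite: "finite (dyads n)"
  by (rule finite_subset[of _ "{..<n} \<times> {..<n}"]) (auto simp: dyads_def)

lemma fac_nonneg: "tau \<in> var_params n Q \<Longrightarrow> z \<in> configs n Q \<Longrightarrow> 0 \<le> factorized n tau z"
  unfolding factorized_def by (rule prod_nonneg) (auto simp: var_params_def configs_in)

lemma rowsum:
  fixes i n :: nat assumes "i < n"
  shows "(\<Sum>k<n. F k ((tau(i:=x)) k)) = F i x + (\<Sum>k\<in>{..<n}-{i}. F k (tau k))"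
proof -
  have "(\<Sum>k<n. F k ((tau(i:=x)) k)) = F i ((tau(i:=x)) i) + (\<Sum>k\<in>{..<n}-{i}. F k ((tau(i:=x)) k))"
    by (rule sum.remove) (use assms in auto)
  also have "(\<Sum>k\<in>{..<n}-{i}. F k ((tau(i:=x)) k)) = (\<Sum>k\<in>{..<n}-{i}. F k (tau k))"
    by (intro sum.cong) auto
  finally show ?thesis by simp
qed

lemma pairdec:
  fixes a b i :: nat and B :: "nat \<Rightarrow> nat \<Rightarrow> real"
  assumes ab: "a \<noteq> b"
  shows "(\<Sum>l1<Q. \<Sum>l2<Q. (tau(i:=x)) a l1 * (tau(i:=x)) b l2 * B l1 l2)
    = (\<Sum>l1<Q. \<Sum>l2<Q. (tau(i:=(\<lambda>_. 0))) a l1 * (tau(i:=(\<lambda>_. 0))) b l2 * B l1 l2)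
      + (if a = i then (\<Sum>q<Q. x q * (\<Sum>l<Q. tau b l * B q l)) else 0)
      + (if b = i then (\<Sum>q<Q. x q * (\<Sum>l<Q. tau a l * B l q)) else 0)"
proof (cases "a = i")
  case True
  thus ?thesis using ab by (simp add: sum_distrib_left mult_ac)
next
  case False
  show ?thesis
  proof (cases "b = i")
    case True
    have "(\<Sum>l1<Q. \<Sum>l2<Q. tau a l1 * x l2 * B l1 l2) = (\<Sum>l2<Q. \<Sum>l1<Q. tau a l1 * x l2 * B l1 l2)"
      by (rule sum.swap)
    also have "\<dots> = (\<Sum>q<Q. x q * (\<Sum>l<Q. tau a l * B l q))"
      by (simp add: sum_distrib_left mult_ac)
    finally show ?thesis using ab False True by simp
  next
    case False2: False
    thus ?thesis using False by simp
  qed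
qed

lemma dy1:
  fixes i :: nat assumes "i < n"
  shows "(\<Sum>(a,b)\<in>dyads n. if a = i then f b else 0) = (\<Sum>b\<in>{..<n}-{i}. (f b :: real))"
proof -
  have d: "dyads n = Sigma {..<n} (\<lambda>a. {..<n}-{a})" by (auto simp: dyads_def)
  have "(\<Sum>(a,b)\<in>dyads n. if a = i then f b else 0) = (\<Sum>a<n. \<Sum>b\<in>{..<n}-{a}. if a = i then f b else 0)"
    unfolding d by (subst sum.Sigma) auto
  also have "\<dots> = (\<Sum>a<n. if a = i then (\<Sum>b\<in>{..<n}-{a}. f b) else 0)"
    by (intro sum.cong) auto
  also have "\<dots> = (\<Sum>b\<in>{..<n}-{i}. f b)" using assms by (subst sum.delta) auto
  finally show ?thesis .
qed

lemma dy2: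
  fixes i :: nat assumes "i < n"
  shows "(\<Sum>(a,b)\<in>dyads n. if b = i then f a else 0) = (\<Sum>a\<in>{..<n}-{i}. (f a :: real))"
proof -
  have d: "dyads n = Sigma {..<n} (\<lambda>a. {..<n}-{a})" by (auto simp: dyads_def)
  have "(\<Sum>(a,b)\<in>dyads n. if b = i then f a else 0) = (\<Sum>a<n. \<Sum>b\<in>{..<n}-{a}. if b = i then f a else 0)"
    unfolding d by (subst sum.Sigma) auto
  also have "\<dots> = (\<Sum>a<n. if a \<noteq> i then f a else 0)"
    using assms by (intro sum.cong refl) (subst sum.delta, auto)
  also have "\<dots> = (\<Sum>a\<in>{a\<in>{..<n}. a \<noteq> i}. f a)" by (rule sum.inter_filter[symmetric]) simp
  also have "{a\<in>{..<n}. a \<noteq> i} = {..<n}-{i}" by auto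
  finally show ?thesis .
qed

lemma swap3:
  fixes S :: "nat set" and x :: "nat \<Rightarrow> real" assumes "finite S"
  shows "(\<Sum>j\<in>S. \<Sum>q<Q. x q * (\<Sum>l<Q. g j q l)) = (\<Sum>q<Q. x q * (\<Sum>l<Q. \<Sum>j\<in>S. g j q l))"
proof -
  have "(\<Sum>j\<in>S. \<Sum>q<Q. x q * (\<Sum>l<Q. g j q l)) = (\<Sum>q<Q. \<Sum>j\<in>S. x q * (\<Sum>l<Q. g j q l))"
    by (rule sum.swap)
  also have "\<dots> = (\<Sum>q<Q. x q * (\<Sum>j\<in>S. \<Sum>l<Q. g j q l))" by (simp add: sum_distrib_left)
  also have "\<dots> = (\<Sum>q<Q. x q * (\<Sum>l<Q. \<Sum>j\<in>S. g j q l))" by (subst sum.swap) simp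
  finally show ?thesis .
qed

lemma gibbs_term:
  fixes x s :: real assumes x: "0 \<le> x" and s: "0 < s"
  shows "0 \<le> x * ln x - x * ln s - x + s" and "x * ln x - x * ln s - x + s = 0 \<Longrightarrow> x = s"
proof -
  have A: "0 \<le> x * ln x - x * ln s - x + s \<and> (x * ln x - x * ln s - x + s = 0 \<longrightarrow> x = s)"
  proof (cases "x = 0")
    case True thus ?thesis using s by simp
  next
    case False
    hence xp: "0 < x" using x by simp
    have le: "ln (s/x) \<le> s/x - 1" using ln_le_minus_one[of "s/x"] xp s by simp
    have e: "x * ln x - x * ln s - x + s = x * ((s/x - 1) - ln (s/x))"
      using xp s by (simp add: ln_div field_simps)
    have "0 \<le> x * ((s/x - 1) - ln (s/x))" using xp le by simp
    moreover have "x = s" if "x * ((s/x - 1) - ln (s/x)) = 0"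
    proof -
      have "ln (s/x) = s/x - 1" using that xp by simp
      hence "s/x = 1" using xp s by (intro ln_eq_minus_one) auto
      thus ?thesis using xp by simp
    qed
    ultimately show ?thesis using e by simp
  qed
  thus "0 \<le> x * ln x - x * ln s - x + s" by blast
  show "x * ln x - x * ln s - x + s = 0 \<Longrightarrow> x = s" using A by blast
qed

lemma gibbs:
  fixes x s :: "nat \<Rightarrow> real"
  assumes x: "\<forall>q<Q. 0 \<le> x q" and s: "\<forall>q<Q. 0 < s q"
    and sx: "(\<Sum>q<Q. x q) = 1" and ss: "(\<Sum>q<Q. s q) = 1"
    and le: "(\<Sum>q<Q. x q * ln (x q) - x q * ln (s q)) \<le> 0"
  shows "\<forall>q<Q. x q = s q"
proof -
  let ?h = "\<lambda>q. x q * ln (x q) - x q * ln (s q) - x q + s q"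
  have "(\<Sum>q<Q. ?h q) = (\<Sum>q<Q. x q * ln (x q) - x q * ln (s q)) - (\<Sum>q<Q. x q) + (\<Sum>q<Q. s q)"
    by (simp add: sum.distrib sum_subtractf)
  hence hs: "(\<Sum>q<Q. ?h q) \<le> 0" using le sx ss by simp
  have hn: "\<forall>q\<in>{..<Q}. 0 \<le> ?h q" using x s gibbs_term(1) by auto
  have "0 \<le> (\<Sum>q<Q. ?h q)" using hn by (intro sum_nonneg) auto
  hence "(\<Sum>q<Q. ?h q) = 0" using hs by linarith
  hence "\<forall>q\<in>{..<Q}. ?h q = 0" using hn by (subst (asm) sum_nonneg_eq_0_iff) auto
  thus ?thesis using x s gibbs_term(2) by auto
qed

locale model =
  fixes n Q M :: nat and piv :: "nat \<Rightarrow> real" and alpha :: "nat \<Rightarrow> nat \<Rightarrow> real \<Rightarrow> real"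
    and T :: real and t :: "nat \<Rightarrow> real" and ii jj :: "nat \<Rightarrow> nat"
  assumes pi_pos: "\<forall>q<Q. 0 < piv q"
    and alpha_pos_events: "\<forall>q<Q. \<forall>l<Q. \<forall>m<M. 0 < alpha q l (t m)"
    and events_ind: "\<forall>m<M. ii m < n \<and> jj m < n \<and> ii m \<noteq> jj m"
    and Qpos: "0 < Q"
begin

abbreviation "L \<equiv> complete_lik n piv alpha T M t ii jj"
abbreviation "P \<equiv> posterior n Q piv alpha T M t ii jj"
abbreviation "C \<equiv> configs n Q"
definition "Zc = (\<Sum>z\<in>C. L z)"

lemma Lpos: "z \<in> C \<Longrightarrow> 0 < L z"
  unfolding complete_lik_def using pi_pos alpha_pos_events events_ind
  by (intro mult_pos_pos prod_pos) (auto simp: configs_in)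

lemma C_ne: "C \<noteq> {}"
proof -
  have "(\<lambda>k. if k < n then 0 else undefined) \<in> C" using Qpos by (auto simp: configs_def PiE_def extensional_def)
  thus ?thesis by blast
qed

lemma Zc_pos: "0 < Zc"
  unfolding Zc_def using C_ne Lpos configs_finite by (intro sum_pos) auto

lemma Ppos: "z \<in> C \<Longrightarrow> 0 < P z"
  using Lpos Zc_pos unfolding posterior_def Zc_def[symmetric] by simp

lemma lnL: "z \<in> C \<Longrightarrow> ln (L z) = - (\<Sum>(a,b)\<in>dyads n. cumint alpha (z a) (z b) T)
     + (\<Sum>m<M. ln (alpha (z (ii m)) (z (jj m)) (t m))) + (\<Sum>k<n. ln (piv (z k)))"
proof -
  assume z: "z \<in> C"
  have p1: "(\<Prod>m<M. alpha (z (ii m)) (z (jj m)) (t m)) > 0"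
    using alpha_pos_events events_ind z by (intro prod_pos) (auto simp: configs_in)
  have p2: "(\<Prod>k<n. piv (z k)) > 0" using pi_pos z by (intro prod_pos) (auto simp: configs_in)
  have l1: "ln (\<Prod>m<M. alpha (z (ii m)) (z (jj m)) (t m)) = (\<Sum>m<M. ln (alpha (z (ii m)) (z (jj m)) (t m)))"
    using alpha_pos_events events_ind z by (intro ln_prod) (auto simp: configs_in intro!: less_imp_neq[symmetric])
  have l2: "ln (\<Prod>k<n. piv (z k)) = (\<Sum>k<n. ln (piv (z k)))"
    using pi_pos z by (intro ln_prod) (auto simp: configs_in intro!: less_imp_neq[symmetric])
  show ?thesis unfolding complete_lik_def
    by (simp only: ln_mult_pos[OF mult_pos_pos[OF exp_gt_zero p1] p2] ln_mult_pos[OF exp_gt_zero p1] l1 l2 ln_exp)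
qed

definition "KLr tau = (\<Sum>z\<in>C. factorized n tau z * ln (factorized n tau z / P z))"

lemma KL_eq: "tau \<in> var_params n Q \<Longrightarrow> KL C (factorized n tau) P = ereal (KLr tau)"
  unfolding KL_def KLr_def using Ppos by (auto intro!: sum.cong simp: less_imp_neq[symmetric])

definition "Ent tau = (\<Sum>k<n. \<Sum>l<Q. tau k l * ln (tau k l))"
definition "Dy tau = (\<Sum>(a,b)\<in>dyads n. \<Sum>l1<Q. \<Sum>l2<Q. tau a l1 * tau b l2 * cumint alpha l1 l2 T)"
definition "Ev tau = (\<Sum>m<M. \<Sum>l1<Q. \<Sum>l2<Q. tau (ii m) l1 * tau (jj m) l2 * ln (alpha l1 l2 (t m)))"
definition "Pp tau = (\<Sum>k<n. \<Sum>l<Q. tau k l * ln (piv l))"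

lemma KLr_eq: assumes tau: "tau \<in> var_params n Q"
  shows "KLr tau = Ent tau + Dy tau - Ev tau - Pp tau + ln Zc"
proof -
  let ?f = "factorized n tau"
  have pw: "?f z * ln (?f z / P z) = ?f z * (\<Sum>k<n. ln (tau k (z k))) - ?f z * ln (L z) + ?f z * ln Zc"
    if z: "z \<in> C" for z
  proof (cases "?f z = 0")
    case True thus ?thesis by simp
  next
    case False
    hence fpos: "?f z > 0" using fac_nonneg[OF tau z] by simp
    have "\<forall>k<n. tau k (z k) \<noteq> 0" using False unfolding factorized_def by auto
    hence lnf: "ln (?f z) = (\<Sum>k<n. ln (tau k (z k)))" unfolding factorized_def by (intro ln_prod) auto
    moreover have lnP: "ln (P z) = ln (L z) - ln Zc"
      unfolding posterior_def Zc_def[symmetric] using Lpos[OF z] Zc_pos by (rule ln_divide_pos)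
    show ?thesis unfolding ln_divide_pos[OF fpos Ppos[OF z]] lnf lnP by (simp add: algebra_simps)
  qed
  have s1: "(\<Sum>z\<in>C. ?f z * (\<Sum>k<n. ln (tau k (z k)))) = Ent tau"
  proof -
    have "(\<Sum>z\<in>C. ?f z * (\<Sum>k<n. ln (tau k (z k)))) = (\<Sum>k<n. \<Sum>z\<in>C. ?f z * ln (tau k (z k)))"
      by (simp add: sum_distrib_left sum.swap[of _ C])
    also have "\<dots> = Ent tau" unfolding Ent_def
      by (intro sum.cong refl) (use E2[OF tau] in auto)
    finally show ?thesis .
  qed
  have s2: "(\<Sum>z\<in>C. ?f z * ln (L z)) = - Dy tau + Ev tau + Pp tau"
  proof -
    have "(\<Sum>z\<in>C. ?f z * ln (L z)) = - (\<Sum>(a,b)\<in>dyads n. \<Sum>z\<in>C. ?f z * cumint alpha (z a) (z b) T)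
      + (\<Sum>m<M. \<Sum>z\<in>C. ?f z * ln (alpha (z (ii m)) (z (jj m)) (t m))) + (\<Sum>k<n. \<Sum>z\<in>C. ?f z * ln (piv (z k)))"
    proof -
      have "(\<Sum>z\<in>C. ?f z * ln (L z)) = (\<Sum>z\<in>C. - (\<Sum>(a,b)\<in>dyads n. ?f z * cumint alpha (z a) (z b) T)
        + (\<Sum>m<M. ?f z * ln (alpha (z (ii m)) (z (jj m)) (t m))) + (\<Sum>k<n. ?f z * ln (piv (z k))))"
        by (intro sum.cong refl) (simp add: lnL algebra_simps sum_distrib_left case_prod_beta)
      also have "\<dots> = - (\<Sum>z\<in>C. \<Sum>(a,b)\<in>dyads n. ?f z * cumint alpha (z a) (z b) T)
        + (\<Sum>z\<in>C. \<Sum>m<M. ?f z * ln (alpha (z (ii m)) (z (jj m)) (t m))) + (\<Sum>z\<in>C. \<Sum>k<n. ?f z * ln (piv (z k)))"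
        by (simp add: sum.distrib sum_negf sum_subtractf)
      also have "(\<Sum>z\<in>C. \<Sum>(a,b)\<in>dyads n. ?f z * cumint alpha (z a) (z b) T) = (\<Sum>(a,b)\<in>dyads n. \<Sum>z\<in>C. ?f z * cumint alpha (z a) (z b) T)"
        unfolding case_prod_beta by (rule sum.swap)
      also have "(\<Sum>z\<in>C. \<Sum>m<M. ?f z * ln (alpha (z (ii m)) (z (jj m)) (t m))) = (\<Sum>m<M. \<Sum>z\<in>C. ?f z * ln (alpha (z (ii m)) (z (jj m)) (t m)))"
        by (rule sum.swap)
      also have "(\<Sum>z\<in>C. \<Sum>k<n. ?f z * ln (piv (z k))) = (\<Sum>k<n. \<Sum>z\<in>C. ?f z * ln (piv (z k)))"
        by (rule sum.swap)
      finally show ?thesis .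
    qed
    also have "(\<Sum>(a,b)\<in>dyads n. \<Sum>z\<in>C. ?f z * cumint alpha (z a) (z b) T) = Dy tau"
      unfolding Dy_def by (intro sum.cong refl) (auto simp: dyads_def E3[OF tau, where \<phi>="\<lambda>l1 l2. cumint alpha l1 l2 T", simplified])
    also have "(\<Sum>m<M. \<Sum>z\<in>C. ?f z * ln (alpha (z (ii m)) (z (jj m)) (t m))) = Ev tau"
      unfolding Ev_def using events_ind by (intro sum.cong refl) (auto simp: E3[OF tau, where \<phi>="\<lambda>l1 l2. ln (alpha l1 l2 (t _))", simplified])
    also have "(\<Sum>k<n. \<Sum>z\<in>C. ?f z * ln (piv (z k))) = Pp tau"
      unfolding Pp_def by (intro sum.cong refl) (auto simp: E2[OF tau, where \<phi>="\<lambda>l. ln (piv l)"])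
    finally show ?thesis .
  qed
  have "KLr tau = (\<Sum>z\<in>C. ?f z * (\<Sum>k<n. ln (tau k (z k)))) - (\<Sum>z\<in>C. ?f z * ln (L z)) + (\<Sum>z\<in>C. ?f z) * ln Zc"
    unfolding KLr_def by (simp add: pw sum.distrib sum_subtractf sum_distrib_right cong: sum.cong)
  thus ?thesis using s1 s2 fac_sum1[OF tau] by simp
qed

definition "Phi tau = Ent tau + Dy tau - Ev tau - Pp tau"
definition "DyC tau i q = (\<Sum>l<Q. \<Sum>j\<in>{..<n}-{i}. tau j l * (cumint alpha q l T + cumint alpha l q T))"
definition "EvC tau i q = (\<Sum>l<Q. \<Sum>m<M. (if ii m = i then tau (jj m) l * ln (alpha q l (t m)) else 0)
    + (if jj m = i then tau (ii m) l * ln (alpha l q (t m)) else 0))"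

lemma Dfun_eq: "Dfun n Q alpha T M t ii jj tau i q = - DyC tau i q + EvC tau i q"
  unfolding Dfun_def DyC_def EvC_def by simp

lemma Ent_row: "i < n \<Longrightarrow> Ent (tau(i:=x)) = (\<Sum>l<Q. x l * ln (x l)) + Ent (tau(i:=(\<lambda>_. 0)))"
  unfolding Ent_def using rowsum[of i n "\<lambda>k r. \<Sum>l<Q. r l * ln (r l)" tau x] rowsum[of i n "\<lambda>k r. \<Sum>l<Q. r l * ln (r l)" tau "\<lambda>_. 0"] by simp

lemma Pp_row: "i < n \<Longrightarrow> Pp (tau(i:=x)) = (\<Sum>l<Q. x l * ln (piv l)) + Pp (tau(i:=(\<lambda>_. 0)))"
  unfolding Pp_def using rowsum[of i n "\<lambda>k r. \<Sum>l<Q. r l * ln (piv l)" tau x] rowsum[of i n "\<lambda>k r. \<Sum>l<Q. r l * ln (piv l)" tau "\<lambda>_. 0"] by simp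

lemma Dy_row: assumes i: "i < n"
  shows "Dy (tau(i:=x)) = Dy (tau(i:=(\<lambda>_. 0))) + (\<Sum>q<Q. x q * DyC tau i q)"
proof -
  let ?B = "\<lambda>l1 l2. cumint alpha l1 l2 T"
  let ?S = "{..<n}-{i}"
  have "Dy (tau(i:=x)) = (\<Sum>(a,b)\<in>dyads n. (\<Sum>l1<Q. \<Sum>l2<Q. (tau(i:=(\<lambda>_. 0))) a l1 * (tau(i:=(\<lambda>_. 0))) b l2 * ?B l1 l2)
      + (if a = i then (\<Sum>q<Q. x q * (\<Sum>l<Q. tau b l * ?B q l)) else 0)
      + (if b = i then (\<Sum>q<Q. x q * (\<Sum>l<Q. tau a l * ?B l q)) else 0))"
    unfolding Dy_def case_prod_beta by (intro sum.cong refl pairdec) (auto simp: dyads_def)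
  also have "\<dots> = Dy (tau(i:=(\<lambda>_. 0))) + (\<Sum>(a,b)\<in>dyads n. if a = i then (\<Sum>q<Q. x q * (\<Sum>l<Q. tau b l * ?B q l)) else 0)
      + (\<Sum>(a,b)\<in>dyads n. if b = i then (\<Sum>q<Q. x q * (\<Sum>l<Q. tau a l * ?B l q)) else 0)"
    unfolding Dy_def by (simp add: sum.distrib case_prod_beta)
  also have "\<dots> = Dy (tau(i:=(\<lambda>_. 0))) + (\<Sum>b\<in>?S. \<Sum>q<Q. x q * (\<Sum>l<Q. tau b l * ?B q l))
      + (\<Sum>a\<in>?S. \<Sum>q<Q. x q * (\<Sum>l<Q. tau a l * ?B l q))"
    using i by (simp only: dy1 dy2)
  also have "\<dots> = Dy (tau(i:=(\<lambda>_. 0))) + (\<Sum>q<Q. x q * (\<Sum>l<Q. \<Sum>j\<in>?S. tau j l * ?B q l))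
      + (\<Sum>q<Q. x q * (\<Sum>l<Q. \<Sum>j\<in>?S. tau j l * ?B l q))"
    by (simp only: swap3[OF finite_Diff[OF finite_lessThan]])
  also have "\<dots> = Dy (tau(i:=(\<lambda>_. 0))) + (\<Sum>q<Q. x q * DyC tau i q)"
    unfolding DyC_def by (simp add: sum.distrib distrib_left)
  finally show ?thesis .
qed

lemma if_sum_helper: "(if c then (\<Sum>q<Q. x q * (\<Sum>l<Q. g q l)) else 0) = (\<Sum>q<Q. x q * (\<Sum>l<Q. if c then g q l else (0::real)))"
  by auto

lemma Ev_row: assumes i: "i < n"
  shows "Ev (tau(i:=x)) = Ev (tau(i:=(\<lambda>_. 0))) + (\<Sum>q<Q. x q * EvC tau i q)"
proof -
  let ?B = "\<lambda>m l1 l2. ln (alpha l1 l2 (t m))"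
  have "Ev (tau(i:=x)) = (\<Sum>m<M. (\<Sum>l1<Q. \<Sum>l2<Q. (tau(i:=(\<lambda>_. 0))) (ii m) l1 * (tau(i:=(\<lambda>_. 0))) (jj m) l2 * ?B m l1 l2)
      + (if ii m = i then (\<Sum>q<Q. x q * (\<Sum>l<Q. tau (jj m) l * ?B m q l)) else 0)
      + (if jj m = i then (\<Sum>q<Q. x q * (\<Sum>l<Q. tau (ii m) l * ?B m l q)) else 0))"
    unfolding Ev_def using events_ind by (intro sum.cong refl pairdec) auto
  also have "\<dots> = Ev (tau(i:=(\<lambda>_. 0))) + (\<Sum>m<M. \<Sum>q<Q. x q * (\<Sum>l<Q. if ii m = i then tau (jj m) l * ?B m q l else 0))
      + (\<Sum>m<M. \<Sum>q<Q. x q * (\<Sum>l<Q. if jj m = i then tau (ii m) l * ?B m l q else 0))"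
    unfolding Ev_def if_sum_helper by (simp add: sum.distrib)
  also have "\<dots> = Ev (tau(i:=(\<lambda>_. 0))) + (\<Sum>q<Q. x q * (\<Sum>l<Q. \<Sum>m<M. if ii m = i then tau (jj m) l * ?B m q l else 0))
      + (\<Sum>q<Q. x q * (\<Sum>l<Q. \<Sum>m<M. if jj m = i then tau (ii m) l * ?B m l q else 0))"
    by (simp only: swap3[OF finite_lessThan])
  also have "\<dots> = Ev (tau(i:=(\<lambda>_. 0))) + (\<Sum>q<Q. x q * EvC tau i q)"
    unfolding EvC_def by (simp add: sum.distrib distrib_left)
  finally show ?thesis .
qed

lemma Phi_row: assumes i: "i < n"
  shows "Phi (tau(i:=x)) = (\<Sum>q<Q. x q * ln (x q)) - (\<Sum>q<Q. x q * (ln (piv q) + Dfun n Q alpha T M t ii jj tau i q))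
     + Phi (tau(i:=(\<lambda>_. 0)))"
  unfolding Phi_def Ent_row[OF i, of tau x] Pp_row[OF i, of tau x] Dy_row[OF i, of tau x] Ev_row[OF i, of tau x] Dfun_eq
  by (simp add: sum.distrib distrib_left sum_subtractf algebra_simps)

end

theorem proposition3:
  fixes n Q M :: nat
    and piv :: "nat \<Rightarrow> real"
    and alpha :: "nat \<Rightarrow> nat \<Rightarrow> real \<Rightarrow> real"
    and T :: real
    and t :: "nat \<Rightarrow> real"
    and ii jj :: "nat \<Rightarrow> nat"
    and tauhat :: "nat \<Rightarrow> nat \<Rightarrow> real"
  assumes pi_pos: "\<forall>q<Q. 0 < piv q"
    and pi_sum: "(\<Sum>q<Q. piv q) = 1"
    and alpha_nonneg: "\<forall>q<Q. \<forall>l<Q. \<forall>s. 0 \<le> alpha q l s"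
    and alpha_int: "\<forall>q<Q. \<forall>l<Q. alpha q l integrable_on {0..T}"
    and alpha_pos_events: "\<forall>q<Q. \<forall>l<Q. \<forall>m<M. 0 < alpha q l (t m)"
    and events_ind: "\<forall>m<M. ii m < n \<and> jj m < n \<and> ii m \<noteq> jj m"
    and times_pos: "M > 0 \<longrightarrow> 0 < t 0"
    and times_incr: "\<forall>m. Suc m < M \<longrightarrow> t m < t (Suc m)"
    and times_lt_T: "\<forall>m<M. t m < T"
    and tauhat_in: "tauhat \<in> var_params n Q"
    and tauhat_min: "\<forall>tau\<in>var_params n Q.
          KL (configs n Q) (factorized n tauhat) (posterior n Q piv alpha T M t ii jj)
          \<le> KL (configs n Q) (factorized n tau) (posterior n Q piv alpha T M t ii jj)"
  shows "\<forall>i<n. \<forall>q<Q. tauhat i q =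
           piv q * exp (Dfun n Q alpha T M t ii jj tauhat i q) /
           (\<Sum>q'<Q. piv q' * exp (Dfun n Q alpha T M t ii jj tauhat i q'))"
proof (intro allI impI)
  fix i q assume i: "i < n" and q: "q < Q"
  let ?x = "tauhat i"
  have xnn: "\<forall>q<Q. 0 \<le> ?x q" and xs: "(\<Sum>q<Q. ?x q) = 1"
    using tauhat_in i by (auto simp: var_params_def)
  have Qpos: "0 < Q" using xs by (cases Q) auto
  interpret model n Q M piv alpha T t ii jj
    using pi_pos alpha_pos_events events_ind Qpos by unfold_locales auto
  define D where "D q = Dfun n Q alpha T M t ii jj tauhat i q" for q
  define c where "c q = ln (piv q) + D q" for q
  define Z where "Z = (\<Sum>q<Q. exp (c q))"
  define s where "s q = exp (c q) / Z" for q
  have Zpos: "0 < Z" unfolding Z_def using Qpos by (intro sum_pos) auto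
  have spos: "\<forall>q<Q. 0 < s q" unfolding s_def using Zpos by auto
  have ssum: "(\<Sum>q<Q. s q) = 1" unfolding s_def using Zpos by (simp add: sum_divide_distrib[symmetric] Z_def)
  have pe: "piv q * exp (D q) = exp (c q)" if "q < Q" for q
    using pi_pos that by (simp add: c_def exp_add)
  have rhs: "piv q * exp (Dfun n Q alpha T M t ii jj tauhat i q) /
           (\<Sum>q'<Q. piv q' * exp (Dfun n Q alpha T M t ii jj tauhat i q')) = s q"
    unfolding s_def Z_def D_def[symmetric] using pe q by simp
  have lns: "ln (s q) = c q - ln Z" if "q < Q" for q
    unfolding s_def using Zpos by (simp add: ln_div)
  have ts: "tauhat(i:=s) \<in> var_params n Q"
    using tauhat_in spos ssum by (auto simp: var_params_def less_imp_le)
  have "KL C (factorized n tauhat) P \<le> KL C (factorized n (tauhat(i:=s))) P"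
    using tauhat_min ts by blast
  hence "KLr tauhat \<le> KLr (tauhat(i:=s))" using KL_eq[OF tauhat_in] KL_eq[OF ts] by simp
  hence "Phi tauhat \<le> Phi (tauhat(i:=s))"
    unfolding KLr_eq[OF tauhat_in] KLr_eq[OF ts] Phi_def by simp
  hence that_le: "Phi (tauhat(i:=?x)) \<le> Phi (tauhat(i:=s))" by simp
  hence le1: "(\<Sum>q<Q. ?x q * ln (?x q)) - (\<Sum>q<Q. ?x q * c q) \<le> (\<Sum>q<Q. s q * ln (s q)) - (\<Sum>q<Q. s q * c q)"
  proof -
    have cc: "(\<Sum>q<Q. y q * (ln (piv q) + Dfun n Q alpha T M t ii jj tauhat i q)) = (\<Sum>q<Q. y q * c q)" for y
      unfolding c_def D_def by (rule refl)
    show ?thesis using that_le Phi_row[OF i, of tauhat ?x] Phi_row[OF i, of tauhat s] cc[of ?x] cc[of s]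
      by linarith
  qed
  have e1: "(\<Sum>q<Q. s q * ln (s q)) = (\<Sum>q<Q. s q * c q) - ln Z"
  proof -
    have "(\<Sum>q<Q. s q * ln (s q)) = (\<Sum>q<Q. s q * c q - s q * ln Z)"
      by (intro sum.cong refl) (simp add: lns right_diff_distrib)
    also have "\<dots> = (\<Sum>q<Q. s q * c q) - ln Z" using ssum by (simp add: sum_subtractf sum_distrib_right[symmetric])
    finally show ?thesis .
  qed
  have e2: "(\<Sum>q<Q. ?x q * ln (s q)) = (\<Sum>q<Q. ?x q * c q) - ln Z"
  proof -
    have "(\<Sum>q<Q. ?x q * ln (s q)) = (\<Sum>q<Q. ?x q * c q - ?x q * ln Z)"
      by (intro sum.cong refl) (simp add: lns right_diff_distrib)
    also have "\<dots> = (\<Sum>q<Q. ?x q * c q) - ln Z" using xs by (simp add: sum_subtractf sum_distrib_right[symmetric])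
    finally show ?thesis .
  qed
  have "(\<Sum>q<Q. ?x q * ln (?x q) - ?x q * ln (s q)) \<le> 0"
    using le1 e1 e2 by (simp add: sum_subtractf)
  hence "\<forall>q<Q. ?x q = s q" using gibbs[OF xnn spos xs ssum] by blast
  thus "tauhat i q = piv q * exp (Dfun n Q alpha T M t ii jj tauhat i q) /
           (\<Sum>q'<Q. piv q' * exp (Dfun n Q alpha T M t ii jj tauhat i q'))"
    using rhs q by simp
qed

end
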